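(* Let $\Gamma=F_r$ ($r\ge2$) be free on $\{a,b,a_3,\dots,a_r\}$, let $n\ge2$, $u_n=a^nba^{-n}b^{-1}$, $D_n=V_{u_n}\subseteq Y$. Let $t\in\Gamma$ and $y\in Y$, and assume $t$ starts with $u_n$. Then $ty\in D_n$ if and only if $y$ does not start with $t^{-1}u_nb$.
   Context: $Y$ is the Gromov boundary of $\Gamma$: infinite reduced words in the generators and their inverses, with $\Gamma$ acting by concatenation and cancellation. For nontrivial $s\in\Gamma$: $y\in Y$ starts with $s$ if $y=sy'$ with $y'\in Y$ and the last letter of the reduced word of $s$ is not the inverse of the first letter of $y'$; $V_s$ is the set of $y\in Y$ starting with $s$; $t\in\Gamma$ starts with $s$ if the reduced word of $t$ begins with the reduced word of $s$. *)

theory Defs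
  imports Main "HOL-Library.Sublist"
begin

text \<open>Letters of the free group F_r: (i, True) is generator number i, (i, False) its inverse.
  Generator 0 is a, generator 1 is b, generators 2..r-1 are a_3..a_r.\<close>
type_synonym letter = "nat \<times> bool"

definition inv_letter :: "letter \<Rightarrow> letter" where
  "inv_letter x = (fst x, \<not> snd x)"

definition reduced :: "letter list \<Rightarrow> bool" where
  "reduced w \<longleftrightarrow> (\<forall>i. Suc i < length w \<longrightarrow> w ! Suc i \<noteq> inv_letter (w ! i))"

definition Gamma :: "nat \<Rightarrow> letter list set" where
  "Gamma r = {w. reduced w \<and> (\<forall>x\<in>set w. fst x < r)}"

text \<open>Free reduction of a word (yields the reduced form); group product is red (s @ t).\<close>
fun red :: "letter list \<Rightarrow> letter list" where
  "red [] = []"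
| "red (x # xs) = (case red xs of [] \<Rightarrow> [x]
     | y # ys \<Rightarrow> (if y = inv_letter x then ys else x # y # ys))"

definition inv_word :: "letter list \<Rightarrow> letter list" where
  "inv_word w = rev (map inv_letter w)"

text \<open>Gromov boundary Y: infinite reduced words.\<close>
definition Ybd :: "nat \<Rightarrow> (nat \<Rightarrow> letter) set" where
  "Ybd r = {y. (\<forall>i. fst (y i) < r) \<and> (\<forall>i. y (Suc i) \<noteq> inv_letter (y i))}"

definition conc :: "letter list \<Rightarrow> (nat \<Rightarrow> letter) \<Rightarrow> (nat \<Rightarrow> letter)" where
  "conc s y = (\<lambda>i. if i < length s then s ! i else y (i - length s))"

definition lmul :: "letter \<Rightarrow> (nat \<Rightarrow> letter) \<Rightarrow> (nat \<Rightarrow> letter)" where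
  "lmul x z = (if z 0 = inv_letter x then (\<lambda>i. z (Suc i)) else conc [x] z)"

definition act :: "letter list \<Rightarrow> (nat \<Rightarrow> letter) \<Rightarrow> (nat \<Rightarrow> letter)" where
  "act t y = foldr lmul t y"

definition starts_Y :: "nat \<Rightarrow> letter list \<Rightarrow> (nat \<Rightarrow> letter) \<Rightarrow> bool" where
  "starts_Y r s y \<longleftrightarrow> s \<noteq> [] \<and>
     (\<exists>y'\<in>Ybd r. y = conc s y' \<and> y' 0 \<noteq> inv_letter (last s))"

definition V :: "nat \<Rightarrow> letter list \<Rightarrow> (nat \<Rightarrow> letter) set" where
  "V r s = {y \<in> Ybd r. starts_Y r s y}"

definition starts_G :: "letter list \<Rightarrow> letter list \<Rightarrow> bool" where
  "starts_G s t \<longleftrightarrow> prefix s t"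

definition ga :: letter where "ga = (0, True)"
definition gb :: letter where "gb = (1, True)"

definition u :: "nat \<Rightarrow> letter list" where
  "u n = replicate n ga @ [gb] @ replicate n (inv_letter ga) @ [inv_letter gb]"

end

theory Submission
  imports Defs
begin

lemma inv_inv[simp]: "inv_letter (inv_letter x) = x" by (simp add: inv_letter_def)
lemma inv_neq[simp]: "inv_letter x \<noteq> x" by (cases x) (simp add: inv_letter_def)
lemma inv_neq2[simp]: "x \<noteq> inv_letter x" by (cases x) (simp add: inv_letter_def)
lemma inv_eq_iff[simp]: "inv_letter x = inv_letter y \<longleftrightarrow> x = y" by (metis inv_inv)
lemma fst_inv[simp]: "fst (inv_letter x) = fst x" by (simp add: inv_letter_def)

lemma reduced_Nil[simp]: "reduced []" by (simp add: reduced_def)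

lemma reduced_Cons: "reduced (x # xs) \<longleftrightarrow> reduced xs \<and> (xs \<noteq> [] \<longrightarrow> hd xs \<noteq> inv_letter x)"
  unfolding reduced_def
proof
  assume H: "\<forall>i. Suc i < length (x#xs) \<longrightarrow> (x#xs) ! Suc i \<noteq> inv_letter ((x#xs) ! i)"
  show "(\<forall>i. Suc i < length xs \<longrightarrow> xs ! Suc i \<noteq> inv_letter (xs ! i)) \<and> (xs \<noteq> [] \<longrightarrow> hd xs \<noteq> inv_letter x)"
  proof
    show "\<forall>i. Suc i < length xs \<longrightarrow> xs ! Suc i \<noteq> inv_letter (xs ! i)"
    proof (intro allI impI)
      fix i assume "Suc i < length xs"
      then show "xs ! Suc i \<noteq> inv_letter (xs ! i)" using H[rule_format, of "Suc i"] by simp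
    qed
    show "xs \<noteq> [] \<longrightarrow> hd xs \<noteq> inv_letter x" using H[rule_format, of 0] by (auto simp: hd_conv_nth)
  qed
next
  assume H: "(\<forall>i. Suc i < length xs \<longrightarrow> xs ! Suc i \<noteq> inv_letter (xs ! i)) \<and> (xs \<noteq> [] \<longrightarrow> hd xs \<noteq> inv_letter x)"
  show "\<forall>i. Suc i < length (x#xs) \<longrightarrow> (x#xs) ! Suc i \<noteq> inv_letter ((x#xs) ! i)"
  proof (intro allI impI)
    fix i assume "Suc i < length (x#xs)"
    then show "(x#xs) ! Suc i \<noteq> inv_letter ((x#xs) ! i)" using H
      by (cases i) (auto simp: hd_conv_nth)
  qed
qed

lemma reduced_append: "reduced (xs @ ys) \<longleftrightarrow> reduced xs \<and> reduced ys \<and>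
   (xs \<noteq> [] \<longrightarrow> ys \<noteq> [] \<longrightarrow> hd ys \<noteq> inv_letter (last xs))"
  by (induction xs) (auto simp: reduced_Cons)

lemma reduced_inv_word: "reduced (inv_word w) \<longleftrightarrow> reduced w"
  by (induction w) (auto simp: inv_word_def reduced_append reduced_Cons last_rev hd_map)

lemma inv_word_inv_word[simp]: "inv_word (inv_word w) = w"
  by (simp add: inv_word_def rev_map comp_def)

lemma reduced_red: "reduced (red w)"
  by (induction w) (auto simp: reduced_Cons split: list.split)

lemma red_reduced: "reduced w \<Longrightarrow> red w = w"
  by (induction w) (auto simp: reduced_Cons split: list.split)

lemma red_append: "red (xs @ ys) = red (xs @ red ys)"
  by (induction xs) (auto simp: red_reduced reduced_red)

lemma red_cancel: "red (inv_letter x # x # zs) = red zs"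
  using reduced_red[of zs] by (auto simp: reduced_Cons split: list.split)

lemma red_inv_cancel: "red (inv_word v @ v @ zs) = red zs"
proof (induction v arbitrary: zs)
  case Nil then show ?case by (simp add: inv_word_def)
next
  case (Cons x v)
  have "inv_word (x#v) @ (x#v) @ zs = inv_word v @ (inv_letter x # x # (v @ zs))"
    by (simp add: inv_word_def)
  hence "red (inv_word (x#v) @ (x#v) @ zs) = red (inv_word v @ red (inv_letter x # x # (v @ zs)))"
    by (metis red_append)
  also have "\<dots> = red (inv_word v @ red (v @ zs))" by (simp only: red_cancel)
  also have "\<dots> = red (inv_word v @ v @ zs)" by (rule red_append[symmetric])
  also have "\<dots> = red zs" by (rule Cons.IH)
  finally show ?case .
qed

lemma act_Nil[simp]: "act [] y = y" by (simp add: act_def)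
lemma act_Cons[simp]: "act (x#s) y = lmul x (act s y)" by (simp add: act_def)
lemma act_append: "act (s@t) y = act s (act t y)" by (simp add: act_def)

lemma conc_single: "conc [x] z = (\<lambda>i. case i of 0 \<Rightarrow> x | Suc j \<Rightarrow> z j)"
  unfolding conc_def
  apply (rule ext)
  subgoal for i by (cases i) auto
  done

lemma lmul_Ybd: "z \<in> Ybd r \<Longrightarrow> fst x < r \<Longrightarrow> lmul x z \<in> Ybd r"
proof (cases "z 0 = inv_letter x")
  case True
  assume "z \<in> Ybd r"
  then show ?thesis using True by (simp add: lmul_def Ybd_def)
next
  case False
  assume a: "z \<in> Ybd r" "fst x < r"
  have "\<forall>i. fst ((\<lambda>i. case i of 0 \<Rightarrow> x | Suc j \<Rightarrow> z j) i) < r"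
  proof
    fix i show "fst ((\<lambda>i. case i of 0 \<Rightarrow> x | Suc j \<Rightarrow> z j) i) < r"
      using a by (cases i) (auto simp: Ybd_def)
  qed
  moreover have "\<forall>i. (\<lambda>i. case i of 0 \<Rightarrow> x | Suc j \<Rightarrow> z j) (Suc i) \<noteq> inv_letter ((\<lambda>i. case i of 0 \<Rightarrow> x | Suc j \<Rightarrow> z j) i)"
  proof
    fix i show "(\<lambda>i. case i of 0 \<Rightarrow> x | Suc j \<Rightarrow> z j) (Suc i) \<noteq> inv_letter ((\<lambda>i. case i of 0 \<Rightarrow> x | Suc j \<Rightarrow> z j) i)"
      using a False by (cases i) (auto simp: Ybd_def)
  qed
  ultimately show ?thesis using False by (simp add: lmul_def conc_single Ybd_def)
qed

lemma act_Ybd: "z \<in> Ybd r \<Longrightarrow> \<forall>x\<in>set s. fst x < r \<Longrightarrow> act s z \<in> Ybd r"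
  by (induction s) (auto intro: lmul_Ybd)

lemma lmul_inv: "z \<in> Ybd r \<Longrightarrow> lmul (inv_letter x) (lmul x z) = z"
proof (cases "z 0 = inv_letter x")
  case True
  assume a: "z \<in> Ybd r"
  have "z (Suc 0) \<noteq> inv_letter (z 0)" using a by (simp add: Ybd_def)
  hence ne: "z (Suc 0) \<noteq> x" using True by simp
  have "lmul x z = (\<lambda>i. z (Suc i))" using True by (simp add: lmul_def)
  hence "lmul (inv_letter x) (lmul x z) = (\<lambda>i. case i of 0 \<Rightarrow> inv_letter x | Suc j \<Rightarrow> z (Suc j))"
    using ne by (simp add: lmul_def conc_single)
  also have "\<dots> = z"
    apply (rule ext)
    subgoal for i using True by (cases i) auto
    done
  finally show ?thesis .
next
  case False
  have "lmul x z = (\<lambda>i. case i of 0 \<Rightarrow> x | Suc j \<Rightarrow> z j)" using False by (simp add: lmul_def conc_single)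
  then show ?thesis by (simp add: lmul_def)
qed

lemma act_inv: "z \<in> Ybd r \<Longrightarrow> \<forall>x\<in>set w. fst x < r \<Longrightarrow> act (inv_word w) (act w z) = z"
proof (induction w)
  case Nil then show ?case by (simp add: inv_word_def)
next
  case (Cons x w)
  have Y: "act w z \<in> Ybd r" using Cons.prems act_Ybd by auto
  have "act (inv_word (x#w)) (act (x#w) z) = act (inv_word w) (lmul (inv_letter x) (lmul x (act w z)))"
    by (simp add: inv_word_def act_append)
  also have "\<dots> = act (inv_word w) (act w z)" using lmul_inv[OF Y] by simp
  also have "\<dots> = z" using Cons by simp
  finally show ?case .
qed

lemma act_inv2: "z \<in> Ybd r \<Longrightarrow> \<forall>x\<in>set w. fst x < r \<Longrightarrow> act w (act (inv_word w) z) = z"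
proof -
  assume a: "z \<in> Ybd r" "\<forall>x\<in>set w. fst x < r"
  have "\<forall>x\<in>set (inv_word w). fst x < r" using a by (auto simp: inv_word_def)
  from act_inv[OF a(1) this] show ?thesis by (simp only: inv_word_inv_word)
qed

lemma conc_Cons: "conc (x#s) y = conc [x] (conc s y)"
  unfolding conc_def
  apply (rule ext)
  subgoal for i by (cases i) auto
  done

lemma act_conc: "reduced s \<Longrightarrow> z \<in> Ybd r \<Longrightarrow> (s \<noteq> [] \<longrightarrow> z 0 \<noteq> inv_letter (last s)) \<Longrightarrow> act s z = conc s z"
proof (induction s)
  case Nil then show ?case by (simp add: conc_def)
next
  case (Cons x s)
  show ?case
  proof (cases "s = []")
    case True then show ?thesis using Cons.prems by (simp add: lmul_def)
  next
    case False
    have IH: "act s z = conc s z" using Cons False by (simp add: reduced_Cons)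
    have "conc s z 0 = hd s" using False by (simp add: conc_def hd_conv_nth)
    hence "conc s z 0 \<noteq> inv_letter x" using Cons.prems False by (simp add: reduced_Cons)
    hence "act (x#s) z = conc [x] (conc s z)" using IH by (simp add: lmul_def)
    then show ?thesis by (simp add: conc_Cons[symmetric])
  qed
qed

theorem lemma5p6:
  fixes r n :: nat and t :: "letter list" and y :: "nat \<Rightarrow> letter"
  assumes "r \<ge> 2" and "n \<ge> 2"
    and "t \<in> Gamma r" and "y \<in> Ybd r"
    and "starts_G (u n) t"
  shows "act t y \<in> V r (u n) \<longleftrightarrow>
         \<not> starts_Y r (red (inv_word t @ u n @ [gb])) y"
proof -
  from assms(5) obtain w where t: "t = u n @ w" unfolding starts_G_def prefix_def by auto
  have tG: "reduced t" "\<forall>x\<in>set t. fst x < r" using assms(3) by (auto simp: Gamma_def)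
  have lastu: "last (u n) = inv_letter gb" "u n \<noteq> []" by (simp_all add: u_def)
  have redu: "reduced (u n)" and redw: "reduced w" and hdw: "w \<noteq> [] \<longrightarrow> hd w \<noteq> gb"
    using tG(1) t lastu by (auto simp: reduced_append)
  have lu: "\<forall>x\<in>set (u n). fst x < r" and lw: "\<forall>x\<in>set w. fst x < r" using tG t by auto
  have gbr: "fst gb < r" using assms(1) by (simp add: gb_def)
  define z where "z = act w y"
  have zY: "z \<in> Ybd r" using act_Ybd assms(4) lw z_def by blast
  have tz: "act t y = act (u n) z" by (simp add: t act_append z_def)
  have A: "act t y \<in> V r (u n) \<longleftrightarrow> z 0 \<noteq> gb"
  proof
    assume "act t y \<in> V r (u n)"
    then obtain z' where z': "z' \<in> Ybd r" "act t y = conc (u n) z'" "z' 0 \<noteq> inv_letter (last (u n))"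
      by (auto simp: V_def starts_Y_def)
    have "conc (u n) z' = act (u n) z'" using act_conc[OF redu z'(1)] z'(3) by simp
    hence "act (u n) z = act (u n) z'" using tz z' by simp
    hence "act (inv_word (u n)) (act (u n) z) = act (inv_word (u n)) (act (u n) z')" by simp
    hence "z = z'" using act_inv zY z'(1) lu by metis
    thus "z 0 \<noteq> gb" using z'(3) lastu by simp
  next
    assume h: "z 0 \<noteq> gb"
    have e: "act t y = conc (u n) z" using tz act_conc[OF redu zY] h lastu by simp
    have "act t y \<in> Ybd r" using tz act_Ybd zY lu by simp
    thus "act t y \<in> V r (u n)" using e zY h lastu by (auto simp: V_def starts_Y_def)
  qed
  have rw: "reduced (inv_word w)" using redw by (simp add: reduced_inv_word)
  have reds: "reduced (inv_word w @ [gb])" using rw hdw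
    by (auto simp: reduced_append reduced_Cons inv_word_def last_rev hd_map)
  have s: "red (inv_word t @ u n @ [gb]) = inv_word w @ [gb]"
  proof -
    have "inv_word t = inv_word w @ inv_word (u n)" by (simp add: t inv_word_def)
    hence "red (inv_word t @ u n @ [gb]) = red (inv_word w @ (inv_word (u n) @ u n @ [gb]))" by simp
    also have "\<dots> = red (inv_word w @ red (inv_word (u n) @ u n @ [gb]))" by (rule red_append)
    also have "\<dots> = red (inv_word w @ [gb])" by (simp only: red_inv_cancel red_append[symmetric])
    also have "\<dots> = inv_word w @ [gb]" using reds by (rule red_reduced)
    finally show ?thesis .
  qed
  have B: "starts_Y r (inv_word w @ [gb]) y \<longleftrightarrow> z 0 = gb"
  proof
    assume "starts_Y r (inv_word w @ [gb]) y"
    then obtain y' where y': "y' \<in> Ybd r" "y = conc (inv_word w @ [gb]) y'" "y' 0 \<noteq> inv_letter gb"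
      by (auto simp: starts_Y_def)
    have "y = act (inv_word w @ [gb]) y'" using act_conc[OF reds y'(1)] y' by simp
    hence "z = act w (act (inv_word w) (act [gb] y'))" by (simp add: z_def act_append)
    also have "\<dots> = act [gb] y'" using act_inv2[OF act_Ybd[OF y'(1), of "[gb]"] lw] gbr by simp
    also have "\<dots> = conc [gb] y'" using y' by (simp add: lmul_def)
    finally show "z 0 = gb" by (simp add: conc_def)
  next
    assume h: "z 0 = gb"
    define y' where "y' = (\<lambda>i. z (Suc i))"
    have y'Y: "y' \<in> Ybd r" using zY by (auto simp: Ybd_def y'_def)
    have "z (Suc 0) \<noteq> inv_letter (z 0)" using zY by (simp add: Ybd_def)
    hence y'0: "y' 0 \<noteq> inv_letter gb" by (simp add: y'_def h)
    have "z = (\<lambda>i. case i of 0 \<Rightarrow> gb | Suc j \<Rightarrow> y' j)"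
      apply (rule ext)
      subgoal for i using h by (cases i) (simp_all add: y'_def)
      done
    also have "\<dots> = conc [gb] y'" by (simp add: conc_single)
    also have "\<dots> = act [gb] y'" using y'0 by (simp add: lmul_def)
    finally have "y = act (inv_word w) (act [gb] y')" using act_inv[OF assms(4) lw] z_def by simp
    also have "\<dots> = act (inv_word w @ [gb]) y'" by (simp add: act_append)
    also have "\<dots> = conc (inv_word w @ [gb]) y'" using act_conc[OF reds y'Y] y'0 by simp
    finally show "starts_Y r (inv_word w @ [gb]) y" using y'Y y'0 by (auto simp: starts_Y_def)
  qed
  show ?thesis using A B s by simp
qed

end
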